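(* Under the setting of the context, if (TS1) holds and $u$ is the solution of problem (P), then $$\mu_x\sum_{m=0}^\infty u(m\mu_x,t)=A\mu_x\quad\text{for all }t\in\mathbb{T}$$ (and $u(m\mu_x,t)=0$ for $m<0$, so this is the sum over all $m\in\mathbb{Z}$).
   Context: A time scale $\mathbb{T}$ is a nonempty closed subset of $\mathbb{R}$; here $\min\mathbb{T}=0$ and $\sup\mathbb{T}=+\infty$. $\sigma(t)=\inf\{s\in\mathbb{T}:s>t\}$ is the forward jump and $\mu_t(t)=\sigma(t)-t$ the graininess; $u^{\Delta_t}$ denotes the (Hilger) delta derivative in $t$. Fix $A>0$, $k>0$, $\mu_x>0$, $\Omega=\mu_x\mathbb{Z}\times\mathbb{T}$. Problem (P): $u^{\Delta_t}(x,t)+k\frac{u(x,t)-u(x-\mu_x,t)}{\mu_x}=0$ for $(x,t)\in\Omega$, $u(0,0)=A$, $u(x,0)=0$ for $x\ne0$. A solution is $u:\Omega\to\mathbb{R}$ with each $u(x,\cdot)$ delta differentiable on $\mathbb{T}$, satisfying (P), and bounded on $\mu_x\mathbb{Z}\times(\mathbb{T}\cap[0,T_0])$ for every $T_0>0$. Condition (TS1): $1-\frac{k\mu_t(t)}{\mu_x}>0$ for all $t\in\mathbb{T}$. *)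

theory Defs
  imports Complex_Main
begin

definition time_scale :: "real set \<Rightarrow> bool" where
  "time_scale TS \<longleftrightarrow> TS \<noteq> {} \<and> closed TS"

definition fwd_jump :: "real set \<Rightarrow> real \<Rightarrow> real" where
  "fwd_jump TS t = Inf {s \<in> TS. s > t}"

definition graininess :: "real set \<Rightarrow> real \<Rightarrow> real" where
  "graininess TS t = fwd_jump TS t - t"

definition has_delta_deriv :: "real set \<Rightarrow> (real \<Rightarrow> real) \<Rightarrow> real \<Rightarrow> real \<Rightarrow> bool" where
  "has_delta_deriv TS f D t \<longleftrightarrow>
     (\<forall>\<epsilon>>0. \<exists>\<delta>>0. \<forall>s\<in>TS. \<bar>t - s\<bar> < \<delta> \<longrightarrow>
        \<bar>f (fwd_jump TS t) - f s - D * (fwd_jump TS t - s)\<bar> \<le> \<epsilon> * \<bar>fwd_jump TS t - s\<bar>)"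

definition delta_differentiable_at :: "real set \<Rightarrow> (real \<Rightarrow> real) \<Rightarrow> real \<Rightarrow> bool" where
  "delta_differentiable_at TS f t \<longleftrightarrow> (\<exists>D. has_delta_deriv TS f D t)"

definition delta_differentiable_on :: "real set \<Rightarrow> (real \<Rightarrow> real) \<Rightarrow> bool" where
  "delta_differentiable_on TS f \<longleftrightarrow> (\<forall>t\<in>TS. delta_differentiable_at TS f t)"

definition delta_deriv :: "real set \<Rightarrow> (real \<Rightarrow> real) \<Rightarrow> real \<Rightarrow> real" where
  "delta_deriv TS f t = (THE D. has_delta_deriv TS f D t)"

end

theory Submission
  imports Defs "HOL-Analysis.Elementary_Metric_Spaces"
begin


abbreviation unb :: "real set \<Rightarrow> bool" where "unb TS \<equiv> (\<forall>B. \<exists>t\<in>TS. t > B)"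

lemma sig_basic:
  assumes "unb TS"
  shows "{s\<in>TS. s > t} \<noteq> {}" "bdd_below {s\<in>TS. s > t}"
  using assms[rule_format, of t] apply auto[1]
  by (auto simp: bdd_below_def intro!: exI[of _ t])

lemma eps_le:
  fixes x y :: real
  assumes "y \<ge> 0" "\<And>e. e > 0 \<Longrightarrow> x \<le> e * y"
  shows "x \<le> 0"
proof (rule field_le_epsilon)
  fix e :: real assume e: "e > 0"
  have "e / (y+1) > 0" using e assms(1) by simp
  then have "x \<le> (e / (y+1)) * y" using assms(2) by blast
  also have "\<dots> \<le> e" using e assms(1) by (simp add: field_simps)
  finally show "x \<le> 0 + e" by simp
qed

lemma sig_ge: "unb TS \<Longrightarrow> t \<le> fwd_jump TS t"
  unfolding fwd_jump_def using sig_basic[of TS t]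
  by (intro cInf_greatest) auto

lemma sig_le: "unb TS \<Longrightarrow> s \<in> TS \<Longrightarrow> s > t \<Longrightarrow> fwd_jump TS t \<le> s"
  unfolding fwd_jump_def using sig_basic[of TS t]
  by (intro cInf_lower) auto

lemma sig_in: "unb TS \<Longrightarrow> closed TS \<Longrightarrow> fwd_jump TS t \<in> TS"
  unfolding fwd_jump_def using sig_basic[of TS t]
  by (intro closed_subset_contains_Inf) auto

lemma sig_dense:
  assumes "unb TS" "fwd_jump TS t = t" "\<delta> > 0"
  shows "\<exists>s\<in>TS. t < s \<and> s < t + \<delta>"
proof -
  have "Inf {s\<in>TS. s > t} < t + \<delta>" using assms unfolding fwd_jump_def by simp
  then obtain s where "s \<in> {s\<in>TS. s > t}" "s < t + \<delta>"
    using cInf_lessD[OF sig_basic(1)[OF assms(1)]] by blast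
  then show ?thesis by auto
qed

lemma hd_step:
  assumes "has_delta_deriv TS f D t" "t \<in> TS"
  shows "f (fwd_jump TS t) = f t + (fwd_jump TS t - t) * D"
proof -
  have "\<bar>f (fwd_jump TS t) - f t - D * (fwd_jump TS t - t)\<bar> \<le> e * \<bar>fwd_jump TS t - t\<bar>"
    if "e > 0" for e
    using assms that unfolding has_delta_deriv_def by fastforce
  then have "\<bar>f (fwd_jump TS t) - f t - D * (fwd_jump TS t - t)\<bar> \<le> 0"
    by (rule eps_le[OF abs_ge_zero])
  then show ?thesis by (simp add: algebra_simps)
qed

lemma hd_unique:
  assumes unb: "unb TS" and t: "t \<in> TS"
    and h1: "has_delta_deriv TS f D1 t" and h2: "has_delta_deriv TS f D2 t"
  shows "D1 = D2"
proof (rule ccontr)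
  assume ne: "D1 \<noteq> D2"
  define e where "e = \<bar>D1 - D2\<bar> / 4"
  have e: "e > 0" using ne by (simp add: e_def)
  obtain d1 where d1: "d1 > 0" "\<forall>s\<in>TS. \<bar>t - s\<bar> < d1 \<longrightarrow>
      \<bar>f (fwd_jump TS t) - f s - D1 * (fwd_jump TS t - s)\<bar> \<le> e * \<bar>fwd_jump TS t - s\<bar>"
    using h1 e unfolding has_delta_deriv_def by blast
  obtain d2 where d2: "d2 > 0" "\<forall>s\<in>TS. \<bar>t - s\<bar> < d2 \<longrightarrow>
      \<bar>f (fwd_jump TS t) - f s - D2 * (fwd_jump TS t - s)\<bar> \<le> e * \<bar>fwd_jump TS t - s\<bar>"
    using h2 e unfolding has_delta_deriv_def by blast
  have "\<exists>s\<in>TS. \<bar>t - s\<bar> < min d1 d2 \<and> fwd_jump TS t \<noteq> s"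
  proof (cases "fwd_jump TS t = t")
    case True
    then obtain s where "s \<in> TS" "t < s" "s < t + min d1 d2"
      using sig_dense[OF unb True, of "min d1 d2"] d1 d2 by auto
    then show ?thesis using True by (intro bexI[of _ s]) auto
  next
    case False
    then show ?thesis using t d1 d2 by (intro bexI[of _ t]) auto
  qed
  then obtain s where s: "s \<in> TS" "\<bar>t - s\<bar> < d1" "\<bar>t - s\<bar> < d2" "fwd_jump TS t \<noteq> s" by auto
  define a where "a = fwd_jump TS t - s"
  have a: "\<bar>a\<bar> > 0" using s(4) by (simp add: a_def)
  have "\<bar>f (fwd_jump TS t) - f s - D1 * a\<bar> \<le> e * \<bar>a\<bar>" using d1 s by (simp add: a_def)
  moreover have "\<bar>f (fwd_jump TS t) - f s - D2 * a\<bar> \<le> e * \<bar>a\<bar>" using d2 s by (simp add: a_def)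
  ultimately have "\<bar>(D1 - D2) * a\<bar> \<le> 2 * e * \<bar>a\<bar>" by (simp add: abs_le_iff algebra_simps)
  then have "\<bar>D1 - D2\<bar> * \<bar>a\<bar> \<le> (\<bar>D1 - D2\<bar> / 2) * \<bar>a\<bar>" by (simp add: e_def abs_mult)
  then have "\<bar>D1 - D2\<bar> \<le> \<bar>D1 - D2\<bar> / 2" by (subst (asm) mult_le_cancel_right_pos[OF a])
  then show False using ne by simp
qed

lemma hd_cont:
  assumes h: "has_delta_deriv TS f D t" and t: "t \<in> TS" and unb: "unb TS" and e: "e > 0"
  shows "\<exists>\<delta>>0. \<forall>s\<in>TS. \<bar>t - s\<bar> < \<delta> \<longrightarrow> \<bar>f s - f t\<bar> < e"
proof -
  define \<mu> where "\<mu> = fwd_jump TS t - t"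
  have mu: "\<mu> \<ge> 0" using sig_ge[OF unb, of t] by (simp add: \<mu>_def)
  define ep where "ep = e / (2 * (2 * \<mu> + 1))"
  have ep: "ep > 0" using e mu by (simp add: ep_def)
  obtain d where d: "d > 0" "\<forall>s\<in>TS. \<bar>t - s\<bar> < d \<longrightarrow>
      \<bar>f (fwd_jump TS t) - f s - D * (fwd_jump TS t - s)\<bar> \<le> ep * \<bar>fwd_jump TS t - s\<bar>"
    using h ep unfolding has_delta_deriv_def by blast
  define d' where "d' = min d (min 1 (e / (2 * (\<bar>D\<bar> + 1))))"
  have d': "d' > 0" using d e by (simp add: d'_def)
  have "\<bar>f s - f t\<bar> < e" if s: "s \<in> TS" "\<bar>t - s\<bar> < d'" for s
  proof -
    have st: "\<bar>t - s\<bar> < d" "\<bar>t - s\<bar> < 1" "\<bar>t - s\<bar> < e / (2 * (\<bar>D\<bar> + 1))"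
      using s by (auto simp: d'_def)
    have 1: "\<bar>f (fwd_jump TS t) - f s - D * (fwd_jump TS t - s)\<bar> \<le> ep * \<bar>fwd_jump TS t - s\<bar>"
      using d st s by blast
    have 2: "\<bar>f (fwd_jump TS t) - f t - D * (fwd_jump TS t - t)\<bar> \<le> ep * \<bar>fwd_jump TS t - t\<bar>"
      using d t by simp
    have "\<bar>fwd_jump TS t - s\<bar> \<le> \<mu> + \<bar>t - s\<bar>" using mu unfolding \<mu>_def by arith
    also have "\<dots> \<le> \<mu> + 1" using st by simp
    finally have 3: "\<bar>fwd_jump TS t - s\<bar> \<le> \<mu> + 1" .
    have "\<bar>f s - f t - D * (s - t)\<bar> \<le> ep * \<bar>fwd_jump TS t - s\<bar> + ep * \<bar>fwd_jump TS t - t\<bar>"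
      using 1 2 by (simp add: abs_le_iff algebra_simps)
    also have "\<dots> \<le> ep * (\<mu> + 1) + ep * \<mu>"
      using 3 ep mu by (intro add_mono mult_left_mono) (auto simp: \<mu>_def)
    also have "\<dots> = ep * (2 * \<mu> + 1)" by (simp add: algebra_simps)
    also have "\<dots> = e / 2"
    proof -
      have gen: "\<And>x::real. x > 0 \<Longrightarrow> e / (2 * x) * x = e / 2" by simp
      show ?thesis unfolding ep_def using gen[of "2 * \<mu> + 1"] mu by simp
    qed
    finally have A: "\<bar>f s - f t - D * (s - t)\<bar> \<le> e / 2" .
    have "\<bar>D * (s - t)\<bar> = \<bar>D\<bar> * \<bar>t - s\<bar>" by (simp add: abs_mult abs_minus_commute)
    also have "\<dots> \<le> \<bar>D\<bar> * (e / (2 * (\<bar>D\<bar> + 1)))" using st by (intro mult_left_mono) auto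
    also have "\<dots> < e / 2" using e by (simp add: field_simps)
    finally have B: "\<bar>D * (s - t)\<bar> < e / 2" .
    show ?thesis using A B by arith
  qed
  then show ?thesis using d' by blast
qed

lemma hd_lin:
  assumes hf: "has_delta_deriv TS f D t" and hg: "has_delta_deriv TS g E t"
  shows "has_delta_deriv TS (\<lambda>s. a * f s + b * g s) (a * D + b * E) t"
  unfolding has_delta_deriv_def
proof (intro allI impI)
  fix e :: real assume e: "e > 0"
  define ep where "ep = e / (\<bar>a\<bar> + \<bar>b\<bar> + 1)"
  have ep: "ep > 0" using e by (simp add: ep_def add_pos_nonneg)
  obtain d1 where d1: "d1 > 0" "\<forall>s\<in>TS. \<bar>t - s\<bar> < d1 \<longrightarrow>
      \<bar>f (fwd_jump TS t) - f s - D * (fwd_jump TS t - s)\<bar> \<le> ep * \<bar>fwd_jump TS t - s\<bar>"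
    using hf ep unfolding has_delta_deriv_def by blast
  obtain d2 where d2: "d2 > 0" "\<forall>s\<in>TS. \<bar>t - s\<bar> < d2 \<longrightarrow>
      \<bar>g (fwd_jump TS t) - g s - E * (fwd_jump TS t - s)\<bar> \<le> ep * \<bar>fwd_jump TS t - s\<bar>"
    using hg ep unfolding has_delta_deriv_def by blast
  show "\<exists>\<delta>>0. \<forall>s\<in>TS. \<bar>t - s\<bar> < \<delta> \<longrightarrow>
        \<bar>a * f (fwd_jump TS t) + b * g (fwd_jump TS t) - (a * f s + b * g s) - (a * D + b * E) * (fwd_jump TS t - s)\<bar>
        \<le> e * \<bar>fwd_jump TS t - s\<bar>"
  proof (intro exI[of _ "min d1 d2"] conjI ballI impI)
    show "min d1 d2 > 0" using d1 d2 by simp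
    fix s assume s: "s \<in> TS" "\<bar>t - s\<bar> < min d1 d2"
    define X where "X = f (fwd_jump TS t) - f s - D * (fwd_jump TS t - s)"
    define Y where "Y = g (fwd_jump TS t) - g s - E * (fwd_jump TS t - s)"
    define w where "w = \<bar>fwd_jump TS t - s\<bar>"
    have X: "\<bar>X\<bar> \<le> ep * w" using d1 s by (simp add: X_def w_def)
    have Y: "\<bar>Y\<bar> \<le> ep * w" using d2 s by (simp add: Y_def w_def)
    have "a * f (fwd_jump TS t) + b * g (fwd_jump TS t) - (a * f s + b * g s) - (a * D + b * E) * (fwd_jump TS t - s)
        = a * X + b * Y" by (simp add: X_def Y_def algebra_simps)
    also have "\<bar>\<dots>\<bar> \<le> \<bar>a\<bar> * \<bar>X\<bar> + \<bar>b\<bar> * \<bar>Y\<bar>" by (metis abs_mult abs_triangle_ineq)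
    also have "\<dots> \<le> \<bar>a\<bar> * (ep * w) + \<bar>b\<bar> * (ep * w)" using X Y by (intro add_mono mult_left_mono) auto
    also have "\<dots> \<le> (\<bar>a\<bar> + \<bar>b\<bar> + 1) * ep * w" using ep by (simp add: w_def algebra_simps)
    also have "\<dots> = e * w" by (simp add: ep_def add_pos_nonneg)
    finally show "\<bar>a * f (fwd_jump TS t) + b * g (fwd_jump TS t) - (a * f s + b * g s) - (a * D + b * E) * (fwd_jump TS t - s)\<bar>
        \<le> e * \<bar>fwd_jump TS t - s\<bar>" by (simp add: w_def)
  qed
qed

lemma hd_const: "has_delta_deriv TS (\<lambda>s. c) 0 t"
  unfolding has_delta_deriv_def by (auto intro!: exI[of _ 1])

lemma hd_cmul: "has_delta_deriv TS f D t \<Longrightarrow> has_delta_deriv TS (\<lambda>s. a * f s) (a * D) t"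
  using hd_lin[of TS f D t "\<lambda>s. 0" 0 a 0] hd_const[of TS 0 t] by simp

lemma hd_add: "has_delta_deriv TS f D t \<Longrightarrow> has_delta_deriv TS g E t \<Longrightarrow>
    has_delta_deriv TS (\<lambda>s. f s + g s) (D + E) t"
  using hd_lin[of TS f D t g E 1 1] by simp

lemma hd_sum:
  assumes "finite I" "\<And>i. i \<in> I \<Longrightarrow> has_delta_deriv TS (f i) (D i) t"
  shows "has_delta_deriv TS (\<lambda>s. \<Sum>i\<in>I. f i s) (\<Sum>i\<in>I. D i) t"
  using assms
proof (induction I rule: finite_induct)
  case empty then show ?case using hd_const[of TS 0 t] by simp
next
  case (insert x F)
  then show ?case using hd_add[of TS "f x" "D x" t "\<lambda>s. \<Sum>i\<in>F. f i s" "\<Sum>i\<in>F. D i"] by simp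
qed

lemma ts_induct:
  assumes unb: "unb TS" and cl: "closed TS" and a: "a \<in> TS" and Pa: "P a"
    and SC: "\<And>r. r \<in> TS \<Longrightarrow> a \<le> r \<Longrightarrow> fwd_jump TS r > r \<Longrightarrow> P r \<Longrightarrow> P (fwd_jump TS r)"
    and RD: "\<And>r. r \<in> TS \<Longrightarrow> a \<le> r \<Longrightarrow> fwd_jump TS r = r \<Longrightarrow> P r \<Longrightarrow>
              \<exists>\<delta>>0. \<forall>s\<in>TS. r \<le> s \<and> s < r + \<delta> \<longrightarrow> P s"
    and LD: "\<And>r. r \<in> TS \<Longrightarrow> a < r \<Longrightarrow> (\<forall>\<delta>>0. \<exists>s\<in>TS. r - \<delta> < s \<and> s < r) \<Longrightarrow>
              (\<forall>s\<in>TS. a \<le> s \<and> s < r \<longrightarrow> P s) \<Longrightarrow> P r"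
    and r: "r \<in> TS" "a \<le> r"
  shows "P r"
proof (rule ccontr)
  assume nPr: "\<not> P r"
  define F where "F = {r\<in>TS. a \<le> r \<and> \<not> P r}"
  have Fne: "F \<noteq> {}" using r nPr by (auto simp: F_def)
  have Fbdd: "bdd_below F" by (auto simp: F_def bdd_below_def)
  define t0 where "t0 = Inf F"
  have t0TS: "t0 \<in> TS" unfolding t0_def using Fne Fbdd cl by (intro closed_subset_contains_Inf) (auto simp: F_def)
  have t0a: "a \<le> t0" unfolding t0_def using Fne by (intro cInf_greatest) (auto simp: F_def)
  have t0low: "t0 \<le> x" if "x \<in> F" for x unfolding t0_def using that Fbdd by (rule cInf_lower)
  have below: "P s" if "s \<in> TS" "a \<le> s" "s < t0" for s
    using t0low[of s] that by (auto simp: F_def)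
  have Pt0: "P t0"
  proof (cases "t0 = a")
    case True then show ?thesis using Pa by simp
  next
    case False
    then have at0: "a < t0" using t0a by simp
    show ?thesis
    proof (cases "\<forall>\<delta>>0. \<exists>s\<in>TS. t0 - \<delta> < s \<and> s < t0")
      case True
      then show ?thesis using LD[OF t0TS at0 True] below by blast
    next
      case False
      then obtain \<delta> where \<delta>: "\<delta> > 0" "\<forall>s\<in>TS. \<not> (t0 - \<delta> < s \<and> s < t0)" by auto
      define G where "G = {s\<in>TS. a \<le> s \<and> s < t0}"
      have Gne: "G \<noteq> {}" using a at0 by (auto simp: G_def)
      have Gbdd: "bdd_above G" by (auto simp: G_def bdd_above_def intro: less_imp_le)
      define p where "p = Sup G"
      have pTS: "p \<in> TS" unfolding p_def using Gne Gbdd cl by (intro closed_subset_contains_Sup) (auto simp: G_def)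
      have pG: "x \<le> p" if "x \<in> G" for x unfolding p_def using that Gbdd by (rule cSup_upper)
      have pa: "a \<le> p" using pG[of a] a at0 by (auto simp: G_def)
      have pt: "p \<le> t0 - \<delta>" unfolding p_def
      proof (rule cSup_least[OF Gne])
        fix x assume "x \<in> G"
        then show "x \<le> t0 - \<delta>" using \<delta> by (auto simp: G_def not_less)
      qed
      have Pp: "P p" using below[OF pTS pa] pt \<delta> by simp
      have "fwd_jump TS p \<le> t0" using sig_le[OF unb t0TS, of p] pt \<delta> by simp
      moreover have "t0 \<le> fwd_jump TS p" unfolding fwd_jump_def
      proof (rule cInf_greatest)
        show "{s \<in> TS. p < s} \<noteq> {}" using sig_basic(1)[OF unb] .
        fix x assume x: "x \<in> {s \<in> TS. p < s}"
        show "t0 \<le> x"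
        proof (rule ccontr)
          assume "\<not> t0 \<le> x"
          then have "x \<in> G" using x pa by (auto simp: G_def)
          then show False using pG[of x] x by simp
        qed
      qed
      ultimately have sp: "fwd_jump TS p = t0" by simp
      show ?thesis using SC[OF pTS pa _ Pp] sp pt \<delta> by simp
    qed
  qed
  have Fgt: "x > t0" if "x \<in> F" for x using t0low[OF that] that Pt0 by (cases "x = t0") (auto simp: F_def)
  show False
  proof (cases "fwd_jump TS t0 = t0")
    case False
    then have sg: "fwd_jump TS t0 > t0" using sig_ge[OF unb, of t0] by simp
    have Ps: "P (fwd_jump TS t0)" using SC[OF t0TS t0a sg Pt0] .
    have "fwd_jump TS t0 \<le> Inf F"
    proof (rule cInf_greatest[OF Fne])
      fix x assume x: "x \<in> F"
      then show "fwd_jump TS t0 \<le> x" using sig_le[OF unb, of x t0] Fgt[OF x] by (auto simp: F_def)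
    qed
    then show False using sg by (simp add: t0_def)
  next
    case True
    obtain \<delta> where \<delta>: "\<delta> > 0" "\<forall>s\<in>TS. t0 \<le> s \<and> s < t0 + \<delta> \<longrightarrow> P s"
      using RD[OF t0TS t0a True Pt0] by blast
    have "t0 + \<delta> \<le> Inf F"
    proof (rule cInf_greatest[OF Fne])
      fix x assume x: "x \<in> F"
      show "t0 + \<delta> \<le> x"
      proof (rule ccontr)
        assume "\<not> t0 + \<delta> \<le> x"
        then show False using \<delta> x Fgt[OF x] by (auto simp: F_def t0_def)
      qed
    qed
    then show False using \<delta> by (simp add: t0_def)
  qed
qed

lemma mvt_lower:
  assumes unb: "unb TS" and cl: "closed TS" and a: "a \<in> TS" and b: "b \<in> TS" and ab: "a \<le> b"
    and L: "L \<ge> 0"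
    and diff: "\<And>r. r \<in> TS \<Longrightarrow> a \<le> r \<Longrightarrow> r \<le> b \<Longrightarrow> has_delta_deriv TS f (F r) r"
    and bnd: "\<And>r. r \<in> TS \<Longrightarrow> a \<le> r \<Longrightarrow> r < b \<Longrightarrow> F r \<ge> - L"
  shows "f b - f a \<ge> - L * (b - a)"
proof -
  have main: "f b - f a \<ge> - (L + \<epsilon>) * (b - a)" if ep: "\<epsilon> > 0" for \<epsilon>
  proof -
    define P where "P = (\<lambda>r. r \<le> b \<longrightarrow> f r - f a \<ge> - (L + \<epsilon>) * (r - a))"
    have "P b"
    proof (rule ts_induct[OF unb cl a, of P])
      show "P a" by (simp add: P_def)
      show "b \<in> TS" "a \<le> b" using b ab by auto
    next
      fix r assume r: "r \<in> TS" "a \<le> r" "fwd_jump TS r > r" "P r"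
      show "P (fwd_jump TS r)" unfolding P_def
      proof
        assume sb: "fwd_jump TS r \<le> b"
        then have rb: "r < b" using r by simp
        have Fr: "F r \<ge> - L" using bnd r rb by simp
        have st: "f (fwd_jump TS r) = f r + (fwd_jump TS r - r) * F r"
          using hd_step[OF diff[OF r(1) r(2)] r(1)] rb by simp
        have IH: "f r - f a \<ge> - (L + \<epsilon>) * (r - a)" using r rb by (simp add: P_def)
        have "(fwd_jump TS r - r) * F r \<ge> (fwd_jump TS r - r) * (- L)"
          using Fr r(3) by (intro mult_left_mono) auto
        moreover have "(fwd_jump TS r - r) * (- L) \<ge> (fwd_jump TS r - r) * (- (L + \<epsilon>))"
          using ep r(3) by (intro mult_left_mono) auto
        ultimately show "f (fwd_jump TS r) - f a \<ge> - (L + \<epsilon>) * (fwd_jump TS r - a)"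
          using st IH by (simp add: algebra_simps)
      qed
    next
      fix r assume r: "r \<in> TS" "a \<le> r" "fwd_jump TS r = r" "P r"
      show "\<exists>\<delta>>0. \<forall>s\<in>TS. r \<le> s \<and> s < r + \<delta> \<longrightarrow> P s"
      proof (cases "b \<le> r")
        case True
        show ?thesis
        proof (intro exI[of _ 1] conjI ballI impI)
          fix s assume "s \<in> TS" "r \<le> s \<and> s < r + 1"
          then show "P s" using True r(4) unfolding P_def by (cases "s = r") auto
        qed simp
      next
        case False
        then have rb: "r < b" by simp
        have Fr: "F r \<ge> - L" using bnd r rb by simp
        have IH: "f r - f a \<ge> - (L + \<epsilon>) * (r - a)" using r rb by (simp add: P_def)
        obtain d where d: "d > 0" "\<forall>s\<in>TS. \<bar>r - s\<bar> < d \<longrightarrow>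
          \<bar>f (fwd_jump TS r) - f s - F r * (fwd_jump TS r - s)\<bar> \<le> \<epsilon> * \<bar>fwd_jump TS r - s\<bar>"
          using diff[OF r(1) r(2)] rb ep unfolding has_delta_deriv_def by force
        show ?thesis
        proof (intro exI[of _ d] conjI ballI impI)
          show "d > 0" by fact
          fix s assume s: "s \<in> TS" "r \<le> s \<and> s < r + d"
          have "\<bar>f r - f s - F r * (r - s)\<bar> \<le> \<epsilon> * \<bar>r - s\<bar>" using d s r(3) by auto
          then have 1: "f s - f r \<ge> F r * (s - r) - \<epsilon> * (s - r)" using s by (simp add: abs_le_iff algebra_simps)
          have 2: "F r * (s - r) \<ge> (- L) * (s - r)" using Fr s by (intro mult_right_mono) auto
          show "P s" unfolding P_def
          proof
            show "f s - f a \<ge> - (L + \<epsilon>) * (s - a)" using 1 2 IH by (simp add: algebra_simps)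
          qed
        qed
      qed
    next
      fix r assume r: "r \<in> TS" "a < r" and ld: "\<forall>\<delta>>0. \<exists>s\<in>TS. r - \<delta> < s \<and> s < r"
        and bl: "\<forall>s\<in>TS. a \<le> s \<and> s < r \<longrightarrow> P s"
      show "P r" unfolding P_def
      proof
        assume rb: "r \<le> b"
        have "f a - f r - (L + \<epsilon>) * (r - a) \<le> e" if e: "e > 0" for e
        proof -
          obtain d where d: "d > 0" "\<forall>s\<in>TS. \<bar>r - s\<bar> < d \<longrightarrow> \<bar>f s - f r\<bar> < e"
            using hd_cont[OF diff[OF r(1) _ rb] r(1) unb e] r by auto
          obtain s where s: "s \<in> TS" "r - min d (r - a) < s" "s < r" using ld[rule_format, of "min d (r - a)"] d r by auto
          have sa: "a \<le> s" using s by simp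
          have Ps: "f s - f a \<ge> - (L + \<epsilon>) * (s - a)" using bl s sa rb unfolding P_def by auto
          have "(L + \<epsilon>) * (s - a) \<le> (L + \<epsilon>) * (r - a)" using L ep s by (intro mult_left_mono) auto
          moreover have "\<bar>f s - f r\<bar> < e" using d s by auto
          ultimately show ?thesis using Ps by (simp add: abs_less_iff algebra_simps)
        qed
        then have "f a - f r - (L + \<epsilon>) * (r - a) \<le> 0" using field_le_epsilon[of "f a - f r - (L + \<epsilon>) * (r - a)" 0] by simp
        then show "f r - f a \<ge> - (L + \<epsilon>) * (r - a)" by (simp add: algebra_simps)
      qed
    qed
    then show ?thesis by (simp add: P_def)
  qed
  have "f a - f b - L * (b - a) \<le> 0"
  proof (rule eps_le[of "b - a"])
    show "b - a \<ge> 0" using ab by simp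
    fix e :: real assume "e > 0"
    then show "f a - f b - L * (b - a) \<le> e * (b - a)" using main[of e] by (simp add: algebra_simps)
  qed
  then show ?thesis by (simp add: algebra_simps)
qed

lemma mvt_abs:
  assumes unb: "unb TS" and cl: "closed TS" and a: "a \<in> TS" and b: "b \<in> TS" and ab: "a \<le> b"
    and diff: "\<And>r. r \<in> TS \<Longrightarrow> a \<le> r \<Longrightarrow> r \<le> b \<Longrightarrow> has_delta_deriv TS f (F r) r"
    and bnd: "\<And>r. r \<in> TS \<Longrightarrow> a \<le> r \<Longrightarrow> r < b \<Longrightarrow> \<bar>F r\<bar> \<le> L"
  shows "\<bar>f b - f a\<bar> \<le> L * (b - a)"
proof (cases "a = b")
  case True then show ?thesis by simp
next
  case False
  then have ab': "a < b" using ab by simp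
  have L: "L \<ge> 0" using bnd[OF a order.refl ab'] by linarith
  have 1: "f b - f a \<ge> - L * (b - a)"
  proof (rule mvt_lower[OF unb cl a b ab L diff])
    fix r assume "r \<in> TS" "a \<le> r" "r < b"
    then have "\<bar>F r\<bar> \<le> L" by (rule bnd)
    then show "F r \<ge> - L" by linarith
  qed
  have 2: "(\<lambda>s. - f s) b - (\<lambda>s. - f s) a \<ge> - L * (b - a)"
  proof (rule mvt_lower[OF unb cl a b ab L, where F="\<lambda>r. - F r"])
    fix r assume "r \<in> TS" "a \<le> r" "r \<le> b"
    then show "has_delta_deriv TS (\<lambda>s. - f s) (- F r) r" using hd_cmul[OF diff, of r "-1"] by simp
  next
    fix r assume "r \<in> TS" "a \<le> r" "r < b"
    then have "\<bar>F r\<bar> \<le> L" by (rule bnd)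
    then show "- L \<le> - F r" by linarith
  qed
  show ?thesis using 1 2 by (simp add: abs_le_iff algebra_simps)
qed



lemma pos_lemma:
  assumes unb: "unb TS" and cl: "closed TS" and a: "a \<in> TS" and c: "c > 0"
    and diff: "\<And>r. r \<in> TS \<Longrightarrow> a \<le> r \<Longrightarrow> has_delta_deriv TS f (F r) r"
    and bnd: "\<And>r. r \<in> TS \<Longrightarrow> a \<le> r \<Longrightarrow> F r \<ge> - c * f r"
    and gr: "\<And>r. r \<in> TS \<Longrightarrow> a \<le> r \<Longrightarrow> 1 - c * (fwd_jump TS r - r) > 0"
    and fa: "f a \<ge> 0" and r: "r \<in> TS" "a \<le> r"
  shows "f r \<ge> 0"
proof -
  have main: "f r \<ge> - \<epsilon>" if ep: "\<epsilon> > 0" for \<epsilon>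
  proof (rule ts_induct[OF unb cl a, of "\<lambda>r. f r \<ge> - \<epsilon>"])
    show "f a \<ge> - \<epsilon>" using fa ep by simp
    show "r \<in> TS" "a \<le> r" using r by auto
  next
    fix r assume r: "r \<in> TS" "a \<le> r" "fwd_jump TS r > r" "f r \<ge> - \<epsilon>"
    define m where "m = fwd_jump TS r - r"
    have m: "m > 0" using r by (simp add: m_def)
    have st: "f (fwd_jump TS r) = f r + m * F r" using hd_step[OF diff[OF r(1) r(2)] r(1)] by (simp add: m_def)
    have "m * F r \<ge> m * (- c * f r)" using bnd[OF r(1) r(2)] m by (intro mult_left_mono) auto
    then have 1: "f (fwd_jump TS r) \<ge> (1 - c * m) * f r" using st by (simp add: algebra_simps)
    have g: "1 - c * m > 0" using gr[OF r(1) r(2)] by (simp add: m_def)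
    show "f (fwd_jump TS r) \<ge> - \<epsilon>"
    proof (cases "f r \<ge> 0")
      case True
      then have "(1 - c * m) * f r \<ge> 0" using g by simp
      then show ?thesis using 1 ep by linarith
    next
      case False
      have "c * m * f r \<le> 0" using False c m by (simp add: mult_nonneg_nonpos less_imp_le)
      then have "(1 - c * m) * f r \<ge> f r" by (simp add: algebra_simps)
      then show ?thesis using 1 r(4) by linarith
    qed
  next
    fix r assume r: "r \<in> TS" "a \<le> r" "fwd_jump TS r = r" "f r \<ge> - \<epsilon>"
    show "\<exists>\<delta>>0. \<forall>s\<in>TS. r \<le> s \<and> s < r + \<delta> \<longrightarrow> f s \<ge> - \<epsilon>"
    proof (cases "f r > - \<epsilon>")
      case True
      then have e: "f r + \<epsilon> > 0" by simp
      obtain d where d: "d > 0" "\<forall>s\<in>TS. \<bar>r - s\<bar> < d \<longrightarrow> \<bar>f s - f r\<bar> < f r + \<epsilon>"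
        using hd_cont[OF diff[OF r(1) r(2)] r(1) unb e] by blast
      show ?thesis
      proof (intro exI[of _ d] conjI ballI impI)
        fix s assume s: "s \<in> TS" "r \<le> s \<and> s < r + d"
        then have "\<bar>f s - f r\<bar> < f r + \<epsilon>" using d by auto
        then show "f s \<ge> - \<epsilon>" by linarith
      qed (use d in auto)
    next
      case False
      then have fr: "f r = - \<epsilon>" using r(4) by simp
      have "F r \<ge> c * \<epsilon>" using bnd[OF r(1) r(2)] fr by simp
      moreover have "c * \<epsilon> > 0" using c ep by simp
      ultimately have Fp: "F r > 0" by linarith
      obtain d where d: "d > 0" "\<forall>s\<in>TS. \<bar>r - s\<bar> < d \<longrightarrow>
          \<bar>f (fwd_jump TS r) - f s - F r * (fwd_jump TS r - s)\<bar> \<le> F r * \<bar>fwd_jump TS r - s\<bar>"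
        using diff[OF r(1) r(2)] Fp unfolding has_delta_deriv_def by blast
      show ?thesis
      proof (intro exI[of _ d] conjI ballI impI)
        fix s assume s: "s \<in> TS" "r \<le> s \<and> s < r + d"
        then have "\<bar>f r - f s - F r * (r - s)\<bar> \<le> F r * \<bar>r - s\<bar>" using d r(3) by auto
        then have "\<bar>f r - f s - F r * (r - s)\<bar> \<le> F r * (s - r)" using s by simp
        then have "f s - f r \<ge> 0" by (simp add: abs_le_iff algebra_simps)
        then show "f s \<ge> - \<epsilon>" using fr by simp
      qed (use d in auto)
    qed
  next
    fix r assume r: "r \<in> TS" "a < r" and ld: "\<forall>\<delta>>0. \<exists>s\<in>TS. r - \<delta> < s \<and> s < r"
      and bl: "\<forall>s\<in>TS. a \<le> s \<and> s < r \<longrightarrow> f s \<ge> - \<epsilon>"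
    have "- \<epsilon> - f r \<le> e" if e: "e > 0" for e
    proof -
      obtain d where d: "d > 0" "\<forall>s\<in>TS. \<bar>r - s\<bar> < d \<longrightarrow> \<bar>f s - f r\<bar> < e"
        using hd_cont[OF diff[OF r(1)] r(1) unb e] r by auto
      obtain s where s: "s \<in> TS" "r - min d (r - a) < s" "s < r" using ld[rule_format, of "min d (r - a)"] d r by auto
      have "f s \<ge> - \<epsilon>" using bl s by simp
      moreover have "\<bar>f s - f r\<bar> < e" using d s by auto
      ultimately show ?thesis by linarith
    qed
    then have "- \<epsilon> - f r \<le> 0" using field_le_epsilon[of "- \<epsilon> - f r" 0] by simp
    then show "f r \<ge> - \<epsilon>" by simp
  qed
  show ?thesis
  proof (rule ccontr)
    assume "\<not> f r \<ge> 0"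
    then have "- f r / 2 > 0" by simp
    from main[OF this] \<open>\<not> f r \<ge> 0\<close> show False by simp
  qed
qed

lemma small_zero:
  fixes x B :: real
  assumes "x \<ge> 0" "\<And>n::nat. x \<le> B / 2 ^ n"
  shows "x = 0"
proof (rule ccontr)
  assume "x \<noteq> 0"
  then have xp: "x > 0" using assms(1) by simp
  obtain n :: nat where "B / x < 2 ^ n" using real_arch_pow[of 2 "B / x"] by auto
  then have "B < x * 2 ^ n" using xp by (simp add: divide_less_eq mult.commute)
  then have "B / 2 ^ n < x" by (simp add: divide_less_eq)
  then show False using assms(2)[of n] by simp
qed

lemma sbp:
  fixes g :: "nat \<Rightarrow> real"
  shows "(\<Sum>m<Suc N. real m * (g (Suc m) - g m)) = real N * g (Suc N) - (\<Sum>m<N. g (Suc m))"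
  by (induction N) (simp_all add: algebra_simps)



theorem mainTheorem11:
  fixes TS :: "real set" and A k \<mu>x :: real and u :: "real \<Rightarrow> real \<Rightarrow> real"
  assumes ts: "time_scale TS"
    and ts_min: "0 \<in> TS" "\<forall>t\<in>TS. 0 \<le> t"
    and ts_unbounded: "\<forall>B. \<exists>t\<in>TS. t > B"
    and A_pos: "A > 0" and k_pos: "k > 0" and mux_pos: "\<mu>x > 0"
    and TS1: "\<forall>t\<in>TS. 1 - k * graininess TS t / \<mu>x > 0"
    and u_diff: "\<forall>m::int. delta_differentiable_on TS (\<lambda>t. u (of_int m * \<mu>x) t)"
    and u_eq: "\<forall>m::int. \<forall>t\<in>TS.
        delta_deriv TS (\<lambda>s. u (of_int m * \<mu>x) s) t
        + k * (u (of_int m * \<mu>x) t - u (of_int m * \<mu>x - \<mu>x) t) / \<mu>x = 0"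
    and u_init0: "u 0 0 = A"
    and u_init: "\<forall>m::int. m \<noteq> 0 \<longrightarrow> u (of_int m * \<mu>x) 0 = 0"
    and u_bdd: "\<forall>T0>0. \<exists>B. \<forall>m::int. \<forall>t\<in>TS. t \<le> T0 \<longrightarrow> \<bar>u (of_int m * \<mu>x) t\<bar> \<le> B"
  shows "\<forall>t\<in>TS. summable (\<lambda>m::nat. u (real m * \<mu>x) t)
           \<and> \<mu>x * (\<Sum>m. u (real m * \<mu>x) t) = A * \<mu>x
           \<and> (\<forall>m::int. m < 0 \<longrightarrow> u (of_int m * \<mu>x) t = 0)"
proof -
  have cl: "closed TS" using ts by (simp add: time_scale_def)
  note unb = ts_unbounded
  define c where "c = k / \<mu>x"
  have c: "c > 0" using k_pos mux_pos by (simp add: c_def)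
  define U where "U = (\<lambda>(m::int) s. u (of_int m * \<mu>x) s)"
  define D where "D = (\<lambda>(m::int) t. delta_deriv TS (U m) t)"
  have HD: "has_delta_deriv TS (U m) (D m t) t" if t: "t \<in> TS" for m t
  proof -
    obtain D' where D': "has_delta_deriv TS (U m) D' t"
      using u_diff t unfolding delta_differentiable_on_def delta_differentiable_at_def U_def by blast
    have "D m t = D'" unfolding D_def delta_deriv_def
      by (rule the_equality) (auto intro: D' dest: hd_unique[OF unb t D'])
    then show ?thesis using D' by simp
  qed
  have EQ: "D m t = - c * (U m t - U (m - 1) t)" if t: "t \<in> TS" for m t
  proof -
    have 1: "delta_deriv TS (\<lambda>s. u (of_int m * \<mu>x) s) t
        + k * (u (of_int m * \<mu>x) t - u (of_int m * \<mu>x - \<mu>x) t) / \<mu>x = 0" using u_eq t by blast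
    have 2: "u (of_int m * \<mu>x - \<mu>x) t = U (m - 1) t" unfolding U_def by (simp add: algebra_simps)
    have 3: "D m t = delta_deriv TS (\<lambda>s. u (of_int m * \<mu>x) s) t" by (simp add: D_def U_def)
    have "D m t + k * (U m t - U (m - 1) t) / \<mu>x = 0"
      using 1 unfolding 2 3[symmetric] by (simp add: U_def)
    then show ?thesis by (simp add: c_def field_simps)
  qed
  have init0: "U 0 0 = A" using u_init0 by (simp add: U_def)
  have init: "U m 0 = 0" if "m \<noteq> 0" for m using u_init that by (simp add: U_def)
  have bdd: "\<exists>B. \<forall>m. \<forall>t\<in>TS. t \<le> T0 \<longrightarrow> \<bar>U m t\<bar> \<le> B" if "T0 > 0" for T0
    using u_bdd that by (simp add: U_def)
  have gr: "1 - c * (fwd_jump TS t - t) > 0" if "t \<in> TS" for t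
    using TS1 that by (simp add: c_def graininess_def)
  have nonneg: "0 \<le> t" if "t \<in> TS" for t using ts_min that by simp

  have neg: "\<forall>m<0. U m r = 0" if r: "r \<in> TS" for r
  proof (rule ts_induct[OF unb cl ts_min(1), of "\<lambda>r. \<forall>m<0. U m r = 0"])
    show "\<forall>m<0. U m 0 = 0" using init by simp
    show "r \<in> TS" "0 \<le> r" using r nonneg by auto
  next
    fix r assume r: "r \<in> TS" "0 \<le> r" "fwd_jump TS r > r" "\<forall>m<0. U m r = 0"
    show "\<forall>m<0. U m (fwd_jump TS r) = 0"
    proof (intro allI impI)
      fix m :: int assume m: "m < 0"
      have "U m (fwd_jump TS r) = U m r + (fwd_jump TS r - r) * D m r" using hd_step[OF HD[OF r(1)] r(1)] .
      also have "\<dots> = 0" using EQ[OF r(1), of m] r(4) m by simp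
      finally show "U m (fwd_jump TS r) = 0" .
    qed
  next
    fix r assume r: "r \<in> TS" "0 \<le> r" "fwd_jump TS r = r" "\<forall>m<0. U m r = 0"
    obtain B where B: "\<forall>m. \<forall>t\<in>TS. t \<le> r + 1 \<longrightarrow> \<bar>U m t\<bar> \<le> B" using bdd[of "r + 1"] r by auto
    have "\<bar>U 0 r\<bar> \<le> B" using B r(1) by simp
    then have B0: "B \<ge> 0" by linarith
    define \<delta> where "\<delta> = min 1 (1 / (4 * c))"
    have \<delta>: "\<delta> > 0" "\<delta> \<le> 1" "\<delta> \<le> 1 / (4 * c)" using c by (auto simp: \<delta>_def)
    have claim: "\<forall>m<0. \<forall>s\<in>TS. r \<le> s \<and> s < r + \<delta> \<longrightarrow> \<bar>U m s\<bar> \<le> B / 2 ^ n" for n :: nat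
    proof (induction n)
      case 0
      then show ?case using B \<delta> by auto
    next
      case (Suc n)
      define K where "K = B / 2 ^ n"
      have K: "K \<ge> 0" using B0 by (simp add: K_def)
      show ?case
      proof (intro allI impI ballI)
        fix m :: int and s assume m: "m < 0" and s: "s \<in> TS" "r \<le> s \<and> s < r + \<delta>"
        have "\<bar>U m s - U m r\<bar> \<le> (2 * c * K) * (s - r)"
        proof (rule mvt_abs[OF unb cl r(1) s(1)])
          show "r \<le> s" using s by simp
          fix x assume x: "x \<in> TS" "r \<le> x" "x \<le> s"
          then show "has_delta_deriv TS (U m) (D m x) x" using HD by simp
        next
          fix x assume x: "x \<in> TS" "r \<le> x" "x < s"
          have 1: "\<bar>U m x\<bar> \<le> K" using Suc.IH m x s by (auto simp: K_def)
          have 2: "\<bar>U (m - 1) x\<bar> \<le> K" using Suc.IH m x s by (auto simp: K_def)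
          have "\<bar>D m x\<bar> = c * \<bar>U m x - U (m - 1) x\<bar>" using EQ[OF x(1)] c by (simp add: abs_mult)
          also have "\<dots> \<le> c * (2 * K)" using 1 2 c by (intro mult_left_mono) auto
          finally show "\<bar>D m x\<bar> \<le> 2 * c * K" by simp
        qed
        also have "\<dots> \<le> (2 * c * K) * (1 / (4 * c))"
          using s \<delta> c K by (intro mult_left_mono) auto
        also have "\<dots> = K / 2" using c by (simp add: field_simps)
        finally have "\<bar>U m s - U m r\<bar> \<le> K / 2" .
        then show "\<bar>U m s\<bar> \<le> B / 2 ^ Suc n" using r(4) m by (simp add: K_def)
      qed
    qed
    show "\<exists>\<delta>>0. \<forall>s\<in>TS. r \<le> s \<and> s < r + \<delta> \<longrightarrow> (\<forall>m<0. U m s = 0)"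
    proof (intro exI[of _ \<delta>] conjI ballI impI allI)
      fix s m assume "s \<in> TS" "r \<le> s \<and> s < r + \<delta>" "(m::int) < 0"
      then have "\<bar>U m s\<bar> = 0" using claim by (intro small_zero[of _ B]) auto
      then show "U m s = 0" by simp
    qed (use \<delta> in auto)
  next
    fix r assume r: "r \<in> TS" "0 < r" and ld: "\<forall>\<delta>>0. \<exists>s\<in>TS. r - \<delta> < s \<and> s < r"
      and bl: "\<forall>s\<in>TS. 0 \<le> s \<and> s < r \<longrightarrow> (\<forall>m<0. U m s = 0)"
    show "\<forall>m<0. U m r = 0"
    proof (intro allI impI)
      fix m :: int assume m: "m < 0"
      have "\<bar>U m r\<bar> \<le> e" if e: "e > 0" for e
      proof -
        obtain d where d: "d > 0" "\<forall>s\<in>TS. \<bar>r - s\<bar> < d \<longrightarrow> \<bar>U m s - U m r\<bar> < e"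
          using hd_cont[OF HD[OF r(1)] r(1) unb e] by auto
        obtain s where s: "s \<in> TS" "r - min d r < s" "s < r" using ld[rule_format, of "min d r"] d r by auto
        have "U m s = 0" using bl s m by simp
        moreover have "\<bar>U m s - U m r\<bar> < e" using d s by auto
        ultimately show ?thesis by simp
      qed
      then have "\<bar>U m r\<bar> \<le> 0" using field_le_epsilon[of "\<bar>U m r\<bar>" 0] by simp
      then show "U m r = 0" by simp
    qed
  qed
  have pos: "U (int n) r \<ge> 0" if "r \<in> TS" for n r
    using that
  proof (induction n arbitrary: r)
    case 0
    show ?case
    proof (rule pos_lemma[OF unb cl ts_min(1) c, where F="D 0" and f="U (int 0)" and r=r])
      show "r \<in> TS" "0 \<le> r" using 0 nonneg by auto
      show "U (int 0) 0 \<ge> 0" using init0 A_pos by simp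
    next
      fix x assume x: "x \<in> TS" "0 \<le> x"
      show "has_delta_deriv TS (U (int 0)) (D 0 x) x" using HD[OF x(1)] by simp
      show "1 - c * (fwd_jump TS x - x) > 0" using gr[OF x(1)] .
      have "U (0 - 1) x = 0" using neg[OF x(1)] by simp
      then show "D 0 x \<ge> - c * U (int 0) x" using EQ[OF x(1), of 0] by simp
    qed
  next
    case (Suc n)
    show ?case
    proof (rule pos_lemma[OF unb cl ts_min(1) c, where F="D (int (Suc n))" and f="U (int (Suc n))" and r=r])
      show "r \<in> TS" "0 \<le> r" using Suc.prems nonneg by auto
      show "U (int (Suc n)) 0 \<ge> 0" using init[of "int (Suc n)"] by simp
    next
      fix x assume x: "x \<in> TS" "0 \<le> x"
      show "has_delta_deriv TS (U (int (Suc n))) (D (int (Suc n)) x) x" using HD[OF x(1)] by simp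
      show "1 - c * (fwd_jump TS x - x) > 0" using gr[OF x(1)] .
      have h: "c * U (int (Suc n) - 1) x \<ge> 0" using Suc.IH[OF x(1)] c by simp
      have e: "D (int (Suc n)) x = - c * U (int (Suc n)) x + c * U (int (Suc n) - 1) x"
        using EQ[OF x(1), of "int (Suc n)"] by (simp add: algebra_simps)
      show "D (int (Suc n)) x \<ge> - c * U (int (Suc n)) x" using h e by linarith
    qed
  qed
  define S where "S = (\<lambda>N s. \<Sum>m<Suc N. U (int m) s)"
  define W where "W = (\<lambda>N s. \<Sum>m<Suc N. real m * U (int m) s)"
  have dS: "has_delta_deriv TS (S N) (- c * U (int N) s) s" if s: "s \<in> TS" for N s
  proof -
    have h: "has_delta_deriv TS (\<lambda>x. \<Sum>m<Suc N. U (int m) x) (\<Sum>m<Suc N. D (int m) s) s"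
      by (rule hd_sum) (auto intro: HD[OF s])
    define G where "G = (\<lambda>m::nat. U (int m - 1) s)"
    have "(\<Sum>m<Suc N. D (int m) s) = (\<Sum>m<Suc N. - c * (G (Suc m) - G m))"
      by (intro sum.cong refl) (simp add: EQ[OF s] G_def)
    also have "\<dots> = - c * (\<Sum>m<Suc N. G (Suc m) - G m)" by (rule sum_distrib_left[symmetric])
    also have "\<dots> = - c * (G (Suc N) - G 0)" by (simp only: sum_lessThan_telescope)
    also have "\<dots> = - c * U (int N) s" using neg[OF s] by (simp add: G_def)
    finally show ?thesis using h by (simp add: S_def)
  qed
  have dW: "has_delta_deriv TS (W N) (c * (\<Sum>m<N. U (int m) s) - c * real N * U (int N) s) s"
    if s: "s \<in> TS" for N s
  proof -
    have h: "has_delta_deriv TS (\<lambda>x. \<Sum>m<Suc N. real m * U (int m) x) (\<Sum>m<Suc N. real m * D (int m) s) s"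
      by (rule hd_sum) (auto intro: hd_cmul HD[OF s])
    define G where "G = (\<lambda>m::nat. U (int m - 1) s)"
    have "(\<Sum>m<Suc N. real m * D (int m) s) = (\<Sum>m<Suc N. - c * (real m * (G (Suc m) - G m)))"
      by (intro sum.cong refl) (simp add: EQ[OF s] G_def algebra_simps)
    also have "\<dots> = - c * (\<Sum>m<Suc N. real m * (G (Suc m) - G m))" by (rule sum_distrib_left[symmetric])
    also have "\<dots> = - c * (real N * G (Suc N) - (\<Sum>m<N. G (Suc m)))" by (simp only: sbp)
    also have "\<dots> = c * (\<Sum>m<N. U (int m) s) - c * real N * U (int N) s"
      by (simp add: G_def algebra_simps)
    finally show ?thesis using h by (simp add: W_def)
  qed
  have S0: "S N 0 = A" for N
  proof -
    have "S N 0 = U (int 0) 0 + (\<Sum>m<N. U (int (Suc m)) 0)"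
      unfolding S_def by (rule sum.lessThan_Suc_shift)
    also have "\<dots> = A" using init init0 by simp
    finally show ?thesis .
  qed
  have W0: "W N 0 = 0" for N
    unfolding W_def
  proof (intro sum.neutral ballI)
    fix m assume "m \<in> {..<Suc N}"
    show "real m * U (int m) 0 = 0" by (cases "m = 0") (simp_all add: init)
  qed
  have Sle: "S N s \<le> A" if s: "s \<in> TS" for N s
  proof -
    have "(\<lambda>x. - S N x) s - (\<lambda>x. - S N x) 0 \<ge> - 0 * (s - 0)"
    proof (rule mvt_lower[OF unb cl ts_min(1) s nonneg[OF s] order.refl, where F="\<lambda>r. c * U (int N) r"])
      fix r assume r: "r \<in> TS" "0 \<le> r" "r \<le> s"
      show "has_delta_deriv TS (\<lambda>x. - S N x) (c * U (int N) r) r"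
        using hd_cmul[OF dS[OF r(1)], of "-1" N] by simp
    next
      fix r assume r: "r \<in> TS" "0 \<le> r" "r < s"
      show "- 0 \<le> c * U (int N) r" using pos[OF r(1)] c by simp
    qed
    then show ?thesis using S0 by simp
  qed
  have Wle: "W N s \<le> c * A * s" if s: "s \<in> TS" for N s
  proof -
    have cA: "c * A \<ge> 0" using c A_pos by simp
    have "(\<lambda>x. - W N x) s - (\<lambda>x. - W N x) 0 \<ge> - (c * A) * (s - 0)"
    proof (rule mvt_lower[OF unb cl ts_min(1) s nonneg[OF s] cA,
          where F="\<lambda>r. - (c * (\<Sum>m<N. U (int m) r) - c * real N * U (int N) r)"])
      fix r assume r: "r \<in> TS" "0 \<le> r" "r \<le> s"
      show "has_delta_deriv TS (\<lambda>x. - W N x) (- (c * (\<Sum>m<N. U (int m) r) - c * real N * U (int N) r)) r"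
        using hd_cmul[OF dW[OF r(1)], of "-1" N] by simp
    next
      fix r assume r: "r \<in> TS" "0 \<le> r" "r < s"
      have "(\<Sum>m<N. U (int m) r) \<le> S N r" unfolding S_def
        by (rule sum_mono2) (auto intro: pos[OF r(1)])
      also have "\<dots> \<le> A" by (rule Sle[OF r(1)])
      finally have 1: "c * (\<Sum>m<N. U (int m) r) \<le> c * A" using c by simp
      have 2: "c * real N * U (int N) r \<ge> 0" using c pos[OF r(1)] by simp
      show "- (c * A) \<le> - (c * (\<Sum>m<N. U (int m) r) - c * real N * U (int N) r)" using 1 2 by simp
    qed
    then show ?thesis using W0 by simp
  qed
  have UN: "U (int N) s \<le> c * A * s / real N" if s: "s \<in> TS" and N: "N \<ge> 1" for N s
  proof -
    have "real N * U (int N) s \<le> W N s" unfolding W_def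
      by (rule member_le_sum[where f="\<lambda>m. real m * U (int m) s"]) (auto intro!: mult_nonneg_nonneg pos[OF s])
    also have "\<dots> \<le> c * A * s" by (rule Wle[OF s])
    finally show ?thesis using N by (simp add: pos_le_divide_eq mult.commute)
  qed
  have Sge: "S N t \<ge> A - c * c * A * t * t / real N" if t: "t \<in> TS" and N: "N \<ge> 1" for N t
  proof -
    have L: "c * (c * A * t / real N) \<ge> 0" using c A_pos nonneg[OF t] by simp
    have "S N t - S N 0 \<ge> - (c * (c * A * t / real N)) * (t - 0)"
    proof (rule mvt_lower[OF unb cl ts_min(1) t nonneg[OF t] L, where F="\<lambda>r. - c * U (int N) r"])
      fix r assume r: "r \<in> TS" "0 \<le> r" "r \<le> t"
      show "has_delta_deriv TS (S N) (- c * U (int N) r) r" using dS[OF r(1)] .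
    next
      fix r assume r: "r \<in> TS" "0 \<le> r" "r < t"
      have "U (int N) r \<le> c * A * r / real N" using UN[OF r(1) N] .
      also have "\<dots> \<le> c * A * t / real N" using r c A_pos by (intro divide_right_mono mult_left_mono) auto
      finally have "c * U (int N) r \<le> c * (c * A * t / real N)" using c by (intro mult_left_mono) auto
      then show "- (c * (c * A * t / real N)) \<le> - c * U (int N) r" by simp
    qed
    then show ?thesis using S0 by (simp add: algebra_simps)
  qed
  show ?thesis
  proof (intro ballI conjI allI impI)
    fix t assume t: "t \<in> TS"
    show "u (of_int m * \<mu>x) t = 0" if "m < 0" for m using neg[OF t] that by (simp add: U_def)
    have lim: "(\<lambda>N. S N t) \<longlonglongrightarrow> A"
    proof (rule tendsto_sandwich[where f="\<lambda>N. A - c * c * A * t * t / real N" and h="\<lambda>N. A"])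
      show "\<forall>\<^sub>F N in sequentially. A - c * c * A * t * t / real N \<le> S N t"
        using Sge[OF t] by (intro eventually_sequentiallyI[of 1]) auto
      show "\<forall>\<^sub>F N in sequentially. S N t \<le> A" using Sle[OF t] by simp
      show "(\<lambda>N. A - c * c * A * t * t / real N) \<longlonglongrightarrow> A"
        using tendsto_diff[OF tendsto_const lim_const_over_n[of "c * c * A * t * t"], of A] by simp
    qed simp
    have "(\<lambda>m. U (int m) t) sums A"
      unfolding sums_def_le using lim by (simp add: S_def lessThan_Suc_atMost)
    moreover have "(\<lambda>m::nat. U (int m) t) = (\<lambda>m. u (real m * \<mu>x) t)" by (simp add: U_def)
    ultimately have sm: "(\<lambda>m. u (real m * \<mu>x) t) sums A" by simp
    show "summable (\<lambda>m. u (real m * \<mu>x) t)" using sm by (rule sums_summable)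
    show "\<mu>x * (\<Sum>m. u (real m * \<mu>x) t) = A * \<mu>x" using sums_unique[OF sm] by simp
  qed
qed

end
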